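(* There exists an infinite strongly 3-separating set $M_\infty\subseteq\mathbb{N}$ with $1\in M_\infty$.
   Context: $\mathbb{N}=\{1,2,3,\dots\}$. A set $M\subseteq\mathbb{N}$ is 3-separating if $|M|\geq 3$ and for any two triples $(m_1,m_2,m_3)$ and $(n_1,n_2,n_3)$, each consisting of three distinct elements of $M$, we have $n_2(m_3-m_1)=n_1(m_3-m_2)+n_3(m_2-m_1)$ if and only if $(m_1,m_2,m_3)=(n_1,n_2,n_3)$. A set $M$ is strongly 3-separating if it is 3-separating and moreover for any two pairs $(m_1,m_2)$, $(n_1,n_2)$, each consisting of two distinct elements of $M$, we have $m_1-m_2+n_2-n_1=0$ if and only if $(m_1,m_2)=(n_1,n_2)$. *)

theory Defs
  imports Main
begin

text \<open>Subsets of the positive naturals are modelled as sets M of type nat set with 0 not in M.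
  The cardinality condition |M| >= 3 is read as: M infinite or card M >= 3.
  Arithmetic is carried out in the integers.\<close>

definition three_separating :: "nat set \<Rightarrow> bool" where
  "three_separating M \<longleftrightarrow>
     0 \<notin> M \<and> (infinite M \<or> 3 \<le> card M) \<and>
     (\<forall>m1\<in>M. \<forall>m2\<in>M. \<forall>m3\<in>M. \<forall>n1\<in>M. \<forall>n2\<in>M. \<forall>n3\<in>M.
        m1 \<noteq> m2 \<and> m1 \<noteq> m3 \<and> m2 \<noteq> m3 \<and> n1 \<noteq> n2 \<and> n1 \<noteq> n3 \<and> n2 \<noteq> n3 \<longrightarrow>
        (int n2 * (int m3 - int m1) = int n1 * (int m3 - int m2) + int n3 * (int m2 - int m1)
          \<longleftrightarrow> (m1, m2, m3) = (n1, n2, n3)))"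

definition strongly_three_separating :: "nat set \<Rightarrow> bool" where
  "strongly_three_separating M \<longleftrightarrow>
     three_separating M \<and>
     (\<forall>m1\<in>M. \<forall>m2\<in>M. \<forall>n1\<in>M. \<forall>n2\<in>M.
        m1 \<noteq> m2 \<and> n1 \<noteq> n2 \<longrightarrow>
        (int m1 - int m2 + int n2 - int n1 = 0 \<longleftrightarrow> (m1, m2) = (n1, n2)))"

end

theory Submission
  imports Defs
begin

lemma poly0:
  fixes a b c X B :: int
  assumes "\<bar>b\<bar> \<le> B" "\<bar>c\<bar> \<le> B" "0 \<le> B" "B < X" "a*X^2 + b*X + c = 0"
  shows "a = 0 \<and> b = 0 \<and> c = 0"
proof -
  have X0: "X > 0" using assms by linarith
  have bc: "\<bar>b*X + c\<bar> < X*X"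
  proof -
    have "\<bar>b*X + c\<bar> \<le> \<bar>b\<bar>*X + \<bar>c\<bar>" using X0 by (simp add: abs_mult abs_triangle_ineq order_trans[OF abs_triangle_ineq])
    also have "\<dots> \<le> B*X + B" using assms X0 by (intro add_mono mult_right_mono) auto
    also have "\<dots> < B*X + X" using assms by simp
    also have "\<dots> = (B+1)*X" by (simp add: algebra_simps)
    also have "\<dots> \<le> X*X" using assms X0 by (intro mult_right_mono) auto
    finally show ?thesis .
  qed
  have a0: "a = 0"
  proof (rule ccontr)
    assume "a \<noteq> 0"
    hence "\<bar>a*X^2\<bar> \<ge> X*X" using X0 by (simp add: abs_mult power2_eq_square mult_right_mono)
    moreover have "a*X^2 = -(b*X+c)" using assms(5) by simp
    ultimately show False using bc by simp
  qed
  have b0: "b = 0"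
  proof (rule ccontr)
    assume "b \<noteq> 0"
    hence "\<bar>b*X\<bar> \<ge> X" using X0 by (simp add: abs_mult)
    moreover have "b*X = -c" using assms(5) a0 by simp
    ultimately show False using assms by simp
  qed
  show ?thesis using a0 b0 assms(5) by simp
qed


definition ee :: "int \<Rightarrow> int \<Rightarrow> int" where "ee X v = (if v = X then 1 else 0)"
definition rr :: "int \<Rightarrow> int \<Rightarrow> int" where "rr X v = (if v = X then 0 else v)"

lemma ee_rr: "v = ee X v * X + rr X v" by (simp add: ee_def rr_def)

lemma dd_bound: "\<bar>ee X u - ee X v\<bar> \<le> 1" by (simp add: ee_def)
lemma rr_bound: assumes "u = X \<or> (1 \<le> u \<and> u \<le> Y)" "v = X \<or> (1 \<le> v \<and> v \<le> Y)" "0 \<le> Y"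
  shows "\<bar>rr X u - rr X v\<bar> \<le> Y" using assms by (auto simp: rr_def)

lemma prod_bound:
  fixes d s Y :: int assumes "\<bar>d\<bar> \<le> 1" "\<bar>s\<bar> \<le> Y" shows "\<bar>d*s\<bar> \<le> Y"
proof -
  have "\<bar>d*s\<bar> = \<bar>d\<bar>*\<bar>s\<bar>" by (simp add: abs_mult)
  also have "\<dots> \<le> 1*\<bar>s\<bar>" using assms by (intro mult_right_mono) auto
  finally show ?thesis using assms by simp
qed

lemma prod_bound2:
  fixes d s Y :: int assumes "\<bar>d\<bar> \<le> Y" "\<bar>s\<bar> \<le> Y" shows "\<bar>d*s\<bar> \<le> Y*Y"
proof -
  have "\<bar>d*s\<bar> = \<bar>d\<bar>*\<bar>s\<bar>" by (simp add: abs_mult)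
  also have "\<dots> \<le> Y*Y" using assms by (intro mult_mono) auto
  finally show ?thesis .
qed

lemma poly_id:
  fixes X ea ra eb rb ec rc fa sa fb sb fc sc :: int
  shows "((fb*X+sb)-(fa*X+sa))*((ec*X+rc)-(eb*X+rb)) - ((fc*X+sc)-(fb*X+sb))*((eb*X+rb)-(ea*X+ra))
   = ((fb-fa)*(ec-eb) - (fc-fb)*(eb-ea))*X^2
     + ((fb-fa)*(rc-rb) + (sb-sa)*(ec-eb) - (fc-fb)*(rb-ra) - (sc-sb)*(eb-ea))*X
     + ((sb-sa)*(rc-rb) - (sc-sb)*(rb-ra))"
  by (simp add: algebra_simps power2_eq_square)

lemma H1:
  fixes m2 m3 n2 n3 :: int
  assumes "n2 * (m3 - m2) = (n3 - n2) * m2" "m2 - m3 = n2 - n3" "n2 \<noteq> n3"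
  shows "m2 = n2 \<and> m3 = n3"
proof -
  have m3: "m3 = m2 - n2 + n3" using assms(2) by simp
  have "(n3 - n2) * n2 = (n3 - n2) * m2" using assms(1) unfolding m3 by (simp add: algebra_simps)
  hence "n2 = m2" using assms(3) by simp
  thus ?thesis using assms(2) by simp
qed

lemma H2:
  fixes m1 m3 n1 n3 :: int
  assumes "n1 * m3 = n3 * m1" "m3 + (n1 - m1) = n3" "m1 \<noteq> m3"
  shows "m1 = n1 \<and> m3 = n3"
proof -
  have "(n1 - m1) * (m3 - m1) = 0" using assms(1) assms(2)[symmetric] by (simp add: algebra_simps)
  hence "n1 = m1" using assms(3) by simp
  thus ?thesis using assms(2) by simp
qed

lemma core:
  fixes X Y m1 m2 m3 n1 n2 n3 :: int
  assumes Y1: "1 \<le> Y" and XY: "4*Y^2 < X"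
    and r: "\<And>v. v \<in> {m1,m2,m3,n1,n2,n3} \<Longrightarrow> v = X \<or> (1 \<le> v \<and> v \<le> Y)"
    and some: "X \<in> {m1,m2,m3,n1,n2,n3}"
    and dist: "m1 \<noteq> m2" "m1 \<noteq> m3" "m2 \<noteq> m3" "n1 \<noteq> n2" "n1 \<noteq> n3" "n2 \<noteq> n3"
    and eq: "(n2-n1)*(m3-m2) = (n3-n2)*(m2-m1)"
  shows "m1 = n1 \<and> m2 = n2 \<and> m3 = n3"
proof -
  define dN1 where "dN1 = ee X n2 - ee X n1"
  define dM2 where "dM2 = ee X m3 - ee X m2"
  define dN2 where "dN2 = ee X n3 - ee X n2"
  define dM1 where "dM1 = ee X m2 - ee X m1"
  define sN1 where "sN1 = rr X n2 - rr X n1"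
  define sM2 where "sM2 = rr X m3 - rr X m2"
  define sN2 where "sN2 = rr X n3 - rr X n2"
  define sM1 where "sM1 = rr X m2 - rr X m1"
  define a where "a = dN1*dM2 - dN2*dM1"
  define b where "b = dN1*sM2 + sN1*dM2 - dN2*sM1 - sN2*dM1"
  define c where "c = sN1*sM2 - sN2*sM1"
  have Y0: "0 \<le> Y" using Y1 by simp
  have "(n2-n1)*(m3-m2) - (n3-n2)*(m2-m1) = a*X^2 + b*X + c"
    using poly_id[where X=X and ea="ee X m1" and ra="rr X m1" and eb="ee X m2" and rb="rr X m2" and ec="ee X m3" and rc="rr X m3"
      and fa="ee X n1" and sa="rr X n1" and fb="ee X n2" and sb="rr X n2" and fc="ee X n3" and sc="rr X n3"]
    unfolding a_def b_def c_def dN1_def dM2_def dN2_def dM1_def sN1_def sM2_def sN2_def sM1_def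
    by (simp only: ee_rr[symmetric])
  hence E: "a*X^2 + b*X + c = 0" using eq by simp
  have bd: "\<bar>dN1\<bar> \<le> 1" "\<bar>dM2\<bar> \<le> 1" "\<bar>dN2\<bar> \<le> 1" "\<bar>dM1\<bar> \<le> 1"
    unfolding dN1_def dM2_def dN2_def dM1_def by (rule dd_bound)+
  have bs: "\<bar>sN1\<bar> \<le> Y" "\<bar>sM2\<bar> \<le> Y" "\<bar>sN2\<bar> \<le> Y" "\<bar>sM1\<bar> \<le> Y"
    unfolding sN1_def sM2_def sN2_def sM1_def by (rule rr_bound[OF r r Y0]; simp)+
  have YY: "Y \<le> Y*Y" using Y1 by (simp add: mult_le_cancel_left1)
  have "\<bar>b\<bar> \<le> 4*Y"
  proof -
    have "\<bar>b\<bar> \<le> \<bar>dN1*sM2\<bar> + \<bar>sN1*dM2\<bar> + \<bar>dN2*sM1\<bar> + \<bar>sN2*dM1\<bar>" unfolding b_def by linarith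
    moreover have "\<bar>dN1*sM2\<bar> \<le> Y" "\<bar>sN1*dM2\<bar> \<le> Y" "\<bar>dN2*sM1\<bar> \<le> Y" "\<bar>sN2*dM1\<bar> \<le> Y"
      using bd bs prod_bound by (auto simp: mult.commute[of sN1] mult.commute[of sN2])
    ultimately show ?thesis by linarith
  qed
  hence b4: "\<bar>b\<bar> \<le> 4*Y^2" using YY by (simp add: power2_eq_square)
  have "\<bar>c\<bar> \<le> 4*Y^2"
  proof -
    have "\<bar>c\<bar> \<le> \<bar>sN1*sM2\<bar> + \<bar>sN2*sM1\<bar>" unfolding c_def by linarith
    moreover have "\<bar>sN1*sM2\<bar> \<le> Y*Y" "\<bar>sN2*sM1\<bar> \<le> Y*Y" using bs prod_bound2 by auto
    ultimately show ?thesis using Y0 by (simp add: power2_eq_square)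
  qed
  from poly0[OF b4 this _ XY E] have abc: "a = 0" "b = 0" "c = 0" using Y0 by auto
  have XgY: "Y < X" using XY Y1 YY unfolding power2_eq_square by linarith
  show ?thesis
    using abc dist some r[of m1] r[of m2] r[of m3] r[of n1] r[of n2] r[of n3] XgY
    unfolding a_def b_def c_def dN1_def dM2_def dN2_def dM1_def sN1_def sM2_def sN2_def sM1_def ee_def rr_def
    apply (simp split: if_splits)
    using H1 H2 dist by blast+
qed


lemma sidon_core:
  fixes X Y m1 m2 n1 n2 :: int
  assumes Y1: "1 \<le> Y" and XY: "2*Y < X"
    and r: "\<And>v. v \<in> {m1,m2,n1,n2} \<Longrightarrow> v = X \<or> (1 \<le> v \<and> v \<le> Y)"
    and some: "X \<in> {m1,m2,n1,n2}"
    and dist: "m1 \<noteq> m2" "n1 \<noteq> n2"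
    and eq: "m1 - m2 + n2 - n1 = 0"
  shows "m1 = n1 \<and> m2 = n2"
proof -
  define b where "b = ee X m1 - ee X m2 + ee X n2 - ee X n1"
  define c where "c = rr X m1 - rr X m2 + rr X n2 - rr X n1"
  have "m1 - m2 + n2 - n1 = 0*X^2 + b*X + c"
  proof -
    have "m1 - m2 + n2 - n1 = (ee X m1 * X + rr X m1) - (ee X m2 * X + rr X m2)
       + (ee X n2 * X + rr X n2) - (ee X n1 * X + rr X n1)" by (simp only: ee_rr[symmetric])
    also have "\<dots> = 0*X^2 + b*X + c" unfolding b_def c_def by (simp add: algebra_simps)
    finally show ?thesis .
  qed
  hence E: "0*X^2 + b*X + c = 0" using eq by simp
  have Y0: "0 \<le> Y" using Y1 by simp
  have "\<bar>c\<bar> \<le> 2*Y"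
  proof -
    have "\<bar>rr X m1 - rr X m2\<bar> \<le> Y" "\<bar>rr X n2 - rr X n1\<bar> \<le> Y"
      by (rule rr_bound[OF r r Y0]; simp)+
    thus ?thesis unfolding c_def by linarith
  qed
  moreover have "\<bar>b\<bar> \<le> 2*Y" unfolding b_def using Y1 by (simp add: ee_def)
  ultimately have bc: "b = 0" "c = 0" using poly0[OF _ _ _ XY E] Y0 by auto
  have XgY: "Y < X" using XY Y1 by linarith
  show ?thesis
    using bc dist some r[of m1] r[of m2] r[of n1] r[of n2] XgY
    unfolding b_def c_def ee_def rr_def
    by (simp split: if_splits)
qed


fun aa :: "nat \<Rightarrow> nat" where
  "aa 0 = 1"
| "aa (Suc k) = 4 * (aa k)^2 + 1"

lemma aa_pos: "1 \<le> aa k" by (cases k) auto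

lemma aa_sm: "strict_mono aa"
unfolding strict_mono_Suc_iff
proof
  fix k
  have "aa k \<le> aa k * aa k" using aa_pos[of k] by simp
  thus "aa k < aa (Suc k)" unfolding aa.simps power2_eq_square by linarith
qed

lemma reduce:
  fixes I :: "nat set" and P :: "nat \<Rightarrow> bool"
  assumes fin: "finite I" and ne: "I \<noteq> {}"
    and nz: "Max I \<noteq> 0"
  shows "\<exists>K\<in>I. \<exists>X Y::int. 1 \<le> Y \<and> X = 4*Y^2 + 1 \<and> int (aa K) = X \<and>
     (\<forall>i\<in>I. int (aa i) = X \<or> (1 \<le> int (aa i) \<and> int (aa i) \<le> Y))"
proof -
  obtain J where J: "Max I = Suc J" using nz by (cases "Max I") auto
  define Y where "Y = int (aa J)"
  have "\<forall>i\<in>I. int (aa i) = int (aa (Max I)) \<or> (1 \<le> int (aa i) \<and> int (aa i) \<le> Y)"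
  proof
    fix i assume i: "i \<in> I"
    have "i \<le> Max I" using fin i by simp
    hence "i = Max I \<or> i \<le> J" using J by auto
    moreover have "i \<le> J \<Longrightarrow> aa i \<le> aa J" using aa_sm by (simp add: strict_mono_less_eq)
    ultimately show "int (aa i) = int (aa (Max I)) \<or> (1 \<le> int (aa i) \<and> int (aa i) \<le> Y)"
      using aa_pos[of i] Y_def by auto
  qed
  moreover have "int (aa (Max I)) = 4*Y^2 + 1" using J Y_def by simp
  moreover have "1 \<le> Y" using aa_pos[of J] Y_def by simp
  moreover have "Max I \<in> I" using fin ne by simp
  ultimately show ?thesis by blast
qed

theorem corollary2p5:
  shows "\<exists>M :: nat set. infinite M \<and> strongly_three_separating M \<and> 1 \<in> M"
proof (intro exI conjI)
  let ?M = "range aa"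
  show "infinite ?M" using aa_sm strict_mono_imp_inj_on finite_imageD infinite_UNIV_nat by blast
  show "1 \<in> ?M" by (metis aa.simps(1) rangeI)
  have zero: "0 \<notin> ?M" using aa_pos by (metis imageE not_one_le_zero)
  have three: "\<forall>m1\<in>?M. \<forall>m2\<in>?M. \<forall>m3\<in>?M. \<forall>n1\<in>?M. \<forall>n2\<in>?M. \<forall>n3\<in>?M.
        m1 \<noteq> m2 \<and> m1 \<noteq> m3 \<and> m2 \<noteq> m3 \<and> n1 \<noteq> n2 \<and> n1 \<noteq> n3 \<and> n2 \<noteq> n3 \<longrightarrow>
        (int n2 * (int m3 - int m1) = int n1 * (int m3 - int m2) + int n3 * (int m2 - int m1)
          \<longleftrightarrow> (m1, m2, m3) = (n1, n2, n3))"
  proof (intro ballI impI)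
    fix m1 m2 m3 n1 n2 n3 assume mem: "m1 \<in> ?M" "m2 \<in> ?M" "m3 \<in> ?M" "n1 \<in> ?M" "n2 \<in> ?M" "n3 \<in> ?M"
      and d: "m1 \<noteq> m2 \<and> m1 \<noteq> m3 \<and> m2 \<noteq> m3 \<and> n1 \<noteq> n2 \<and> n1 \<noteq> n3 \<and> n2 \<noteq> n3"
    obtain i1 i2 i3 j1 j2 j3 where ij: "m1 = aa i1" "m2 = aa i2" "m3 = aa i3"
      "n1 = aa j1" "n2 = aa j2" "n3 = aa j3" using mem by blast
    let ?I = "{i1,i2,i3,j1,j2,j3}"
    have nz: "Max ?I \<noteq> 0"
    proof
      assume "Max ?I = 0"
      hence "i1 = 0" "i2 = 0" using Max_ge[of ?I i1] Max_ge[of ?I i2] by auto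
      thus False using d ij by simp
    qed
    have fin: "finite ?I" by simp
    have ne: "?I \<noteq> {}" by simp
    obtain K and X Y :: int where MI: "K \<in> ?I" and XY: "1 \<le> Y" "X = 4*Y^2 + 1" "int (aa K) = X"
      and all: "\<forall>i\<in>?I. int (aa i) = X \<or> (1 \<le> int (aa i) \<and> int (aa i) \<le> Y)"
      using reduce[OF fin ne nz] by (elim bexE exE conjE) (rule that, assumption+)
    let ?S = "{int m1, int m2, int m3, int n1, int n2, int n3}"
    have r: "\<And>v. v \<in> ?S \<Longrightarrow> v = X \<or> (1 \<le> v \<and> v \<le> Y)" using all ij by auto
    have some: "X \<in> ?S" using MI XY(3) ij by auto
    have XY4: "4*Y^2 < X" using XY(2) by linarith
    have di: "int m1 \<noteq> int m2" "int m1 \<noteq> int m3" "int m2 \<noteq> int m3"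
      "int n1 \<noteq> int n2" "int n1 \<noteq> int n3" "int n2 \<noteq> int n3" using d by auto
    show "(int n2 * (int m3 - int m1) = int n1 * (int m3 - int m2) + int n3 * (int m2 - int m1))
          \<longleftrightarrow> (m1, m2, m3) = (n1, n2, n3)"
    proof
      assume e: "int n2 * (int m3 - int m1) = int n1 * (int m3 - int m2) + int n3 * (int m2 - int m1)"
      have "(int n2 - int n1) * (int m3 - int m2) = (int n3 - int n2) * (int m2 - int m1)"
        using e by (simp add: algebra_simps)
      from core[OF XY(1) XY4 r some di this] show "(m1, m2, m3) = (n1, n2, n3)" by simp
    next
      assume "(m1, m2, m3) = (n1, n2, n3)"
      thus "int n2 * (int m3 - int m1) = int n1 * (int m3 - int m2) + int n3 * (int m2 - int m1)"
        by (simp add: algebra_simps)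
    qed
  qed
  have sid: "\<forall>m1\<in>?M. \<forall>m2\<in>?M. \<forall>n1\<in>?M. \<forall>n2\<in>?M.
        m1 \<noteq> m2 \<and> n1 \<noteq> n2 \<longrightarrow>
        (int m1 - int m2 + int n2 - int n1 = 0 \<longleftrightarrow> (m1, m2) = (n1, n2))"
  proof (intro ballI impI)
    fix m1 m2 n1 n2 assume mem: "m1 \<in> ?M" "m2 \<in> ?M" "n1 \<in> ?M" "n2 \<in> ?M"
      and d: "m1 \<noteq> m2 \<and> n1 \<noteq> n2"
    obtain i1 i2 j1 j2 where ij: "m1 = aa i1" "m2 = aa i2" "n1 = aa j1" "n2 = aa j2" using mem by blast
    let ?I = "{i1,i2,j1,j2}"
    have nz: "Max ?I \<noteq> 0"
    proof
      assume "Max ?I = 0"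
      hence "i1 = 0" "i2 = 0" using Max_ge[of ?I i1] Max_ge[of ?I i2] by auto
      thus False using d ij by simp
    qed
    have fin: "finite ?I" by simp
    have ne: "?I \<noteq> {}" by simp
    obtain K and X Y :: int where MI: "K \<in> ?I" and XY: "1 \<le> Y" "X = 4*Y^2 + 1" "int (aa K) = X"
      and all: "\<forall>i\<in>?I. int (aa i) = X \<or> (1 \<le> int (aa i) \<and> int (aa i) \<le> Y)"
      using reduce[OF fin ne nz] by (elim bexE exE conjE) (rule that, assumption+)
    have r: "\<And>v. v \<in> {int m1, int m2, int n1, int n2} \<Longrightarrow> v = X \<or> (1 \<le> v \<and> v \<le> Y)" using all ij by auto
    have "Y \<le> Y*Y" using XY(1) by (simp add: mult_le_cancel_left1)
    hence XY2: "2*Y < X" using XY(1) XY(2) unfolding power2_eq_square by linarith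
    show "int m1 - int m2 + int n2 - int n1 = 0 \<longleftrightarrow> (m1, m2) = (n1, n2)"
    proof
      assume eq0: "int m1 - int m2 + int n2 - int n1 = 0"
      have some: "X \<in> {int m1, int m2, int n1, int n2}" using MI XY(3) ij by auto
      from sidon_core[OF XY(1) XY2 r some _ _ eq0] d show "(m1, m2) = (n1, n2)" by simp
    qed simp
  qed
  show "strongly_three_separating ?M"
    unfolding strongly_three_separating_def three_separating_def
    using zero three sid \<open>infinite ?M\<close> by blast
qed


end
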